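(* Let $k\ge 3$ and let $a<b$ be integers. Let $S=\{a=p_1<p_2<\dots<p_{k-1}<p_k=b\}$ and let $a<q_2<\dots<q_{k-1}<b$ be integers with $p_j\le q_j$ for all $2\le j\le k-1$. Let $D=\{a,q_2,\dots,q_{k-1},b\}$ and suppose $\lambda_B(D)\preceq\lambda_A(D)$, where $A=a$, $B=b$. Suppose $2\le i\le k-1$ is such that $p_i<q_i$ and $p_i+1\notin S$, and let $S^{new}=(S\setminus\{p_i\})\cup\{p_i+1\}$. If $S^{new}\neq D$, then $\lambda_B(S^{new})\prec\lambda_A(S^{new})$.
   Context: For a finite set $S\subset\mathbb{Z}$ with $a=\min S$, $b=\max S$, set $L=b-a+1$; $\lambda_A(S)=a_1\cdots a_L$ with $a_i=1$ iff $a+i-1\in S$, and $\lambda_B(S)=b_1\cdots b_L$ with $b_i=1$ iff $b-i+1\in S$. For binary strings of equal length, $\prec$ (resp. $\preceq$) denotes strict (resp. non-strict) lexicographic order with $0<1$. (Here $S$ models robots on a line with head at $a$, tail at $b$, the inner robot $r_j$ at $p_j$ having target $q_j$.) *)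

theory Defs
  imports Main
begin

text \<open>Binary strings are modelled as bool lists (False = 0, True = 1), positions indexed from 1
  in the paper, from 0 in the list.\<close>

definition lamA :: "int set \<Rightarrow> bool list" where
  "lamA S = map (\<lambda>i. Min S + i - 1 \<in> S) [1..Max S - Min S + 1]"

definition lamB :: "int set \<Rightarrow> bool list" where
  "lamB S = map (\<lambda>i. Max S - i + 1 \<in> S) [1..Max S - Min S + 1]"

definition lex_less :: "bool list \<Rightarrow> bool list \<Rightarrow> bool" where
  "lex_less xs ys \<longleftrightarrow> length xs = length ys \<and>
     (\<exists>n < length xs. take n xs = take n ys \<and> \<not> xs ! n \<and> ys ! n)"

definition lex_le :: "bool list \<Rightarrow> bool list \<Rightarrow> bool" where
  "lex_le xs ys \<longleftrightarrow> length xs = length ys \<and> (xs = ys \<or> lex_less xs ys)"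

end

theory Submission imports Defs begin


lemma lamA_eq: assumes "Min X = a" "Max X = b" "a \<le> b"
  shows "lamA X = map (\<lambda>n. a + int n \<in> X) [0..<nat (b-a+1)]"
  unfolding lamA_def using assms
  by (intro nth_equalityI) (auto simp: nth_upto)

lemma lamB_eq: assumes "Min X = a" "Max X = b" "a \<le> b"
  shows "lamB X = map (\<lambda>n. b - int n \<in> X) [0..<nat (b-a+1)]"
  unfolding lamB_def using assms
  by (intro nth_equalityI) (auto simp: nth_upto)

lemma lex_less_map:
  "lex_less (map f [0..<N]) (map g [0..<N]) \<longleftrightarrow> (\<exists>n<N. (\<forall>m<n. f m = g m) \<and> \<not> f n \<and> g n)"
proof -
  have t: "take n (map f [0..<N]) = take n (map g [0..<N]) \<longleftrightarrow> (\<forall>m<n. f m = g m)" if "n < N" for n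
    using that by (auto simp: take_map map_eq_conv min_def)
  show ?thesis unfolding lex_less_def using t by auto
qed

lemma lex_less_trans: "lex_less xs ys \<Longrightarrow> lex_less ys zs \<Longrightarrow> lex_less xs zs"
proof -
  assume a1: "lex_less xs ys" and a2: "lex_less ys zs"
  from a1 obtain n1 where n1: "n1 < length xs" "take n1 xs = take n1 ys" "\<not> xs ! n1" "ys ! n1" and l1: "length xs = length ys"
    unfolding lex_less_def by auto
  from a2 obtain n2 where n2: "n2 < length ys" "take n2 ys = take n2 zs" "\<not> ys ! n2" "zs ! n2" and l2: "length ys = length zs"
    unfolding lex_less_def by auto
  have "n1 \<noteq> n2" using n1 n2 by auto
  then consider "n1 < n2" | "n2 < n1" by linarith
  then show ?thesis
  proof cases
    case 1
    have "take n1 ys = take n1 zs" using n2(2) 1 by (metis min.strict_order_iff take_take)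
    moreover have "ys ! n1 = zs ! n1" using n2(2) 1 n1 n2 l1 l2
      by (metis nth_take)
    ultimately show ?thesis unfolding lex_less_def using n1 l1 l2 by auto
  next
    case 2
    have "take n2 xs = take n2 ys" using n1(2) 2 by (metis min.strict_order_iff take_take)
    moreover have "xs ! n2 = ys ! n2" using n1(2) 2 n1 n2 l1 l2
      by (metis nth_take)
    ultimately show ?thesis unfolding lex_less_def using n2 l1 l2 by auto
  qed
qed

lemma first_diff:
  fixes f g :: "nat \<Rightarrow> bool"
  assumes "n < N" "f n \<noteq> g n"
  obtains n0 where "n0 < N" "\<forall>m<n0. f m = g m" "f n0 \<noteq> g n0"
proof -
  define n0 where "n0 = (LEAST n. f n \<noteq> g n)"
  have 1: "f n0 \<noteq> g n0" unfolding n0_def by (rule LeastI[where P="\<lambda>n. f n \<noteq> g n"]) (rule assms(2))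
  have 2: "n0 \<le> n" unfolding n0_def by (rule Least_le) (rule assms(2))
  have 3: "\<forall>m<n0. f m = g m" unfolding n0_def using not_less_Least[where P="\<lambda>n. f n \<noteq> g n"] by blast
  have 4: "n0 < N" using 2 assms(1) by linarith
  show ?thesis by (rule that[OF 4 3 1])
qed

lemma core:
  fixes T D :: "int set"
  assumes fT: "finite T" and fD: "finite D" and cardeq: "card T = card D"
    and sT: "T \<subseteq> {a..b}" and sD: "D \<subseteq> {a..b}"
    and aT: "a \<in> T" and bT: "b \<in> T" and aD: "a \<in> D" and bD: "b \<in> D" and ab: "a \<le> b"
    and ne: "T \<noteq> D"
    and dom: "\<And>x. card {d\<in>D. d \<le> x} \<le> card {t\<in>T. t \<le> x}"
    and le: "lex_le (lamB D) (lamA D)"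
  shows "lex_less (lamB T) (lamA T)"
proof -
  have minT: "Min T = a" using fT aT sT by (intro Min_eqI) auto
  have maxT: "Max T = b" using fT bT sT by (intro Max_eqI) auto
  have minD: "Min D = a" using fD aD sD by (intro Min_eqI) auto
  have maxD: "Max D = b" using fD bD sD by (intro Max_eqI) auto
  define N where "N = nat (b - a + 1)"
  obtain x where x: "(x \<in> T) \<noteq> (x \<in> D)" using ne by blast
  have xab: "a \<le> x" "x \<le> b" using x sT sD by auto
  have A: "lex_less (lamA D) (lamA T)"
  proof -
    define n where "n = nat (x - a)"
    have n: "n < N" "a + int n = x" using xab unfolding n_def N_def by auto
    obtain n0 where n0: "n0 < N" "\<forall>m<n0. (a + int m \<in> D) = (a + int m \<in> T)"
        "(a + int n0 \<in> D) \<noteq> (a + int n0 \<in> T)"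
      using first_diff[of n N "\<lambda>n. a + int n \<in> D" "\<lambda>n. a + int n \<in> T"] n x by auto
    define x0 where "x0 = a + int n0"
    have agree: "(y \<in> T) = (y \<in> D)" if "y < x0" for y
    proof (cases "y < a")
      case True then show ?thesis using sT sD by auto
    next
      case False
      then have "y = a + int (nat (y - a))" "nat (y - a) < n0" using that unfolding x0_def by auto
      then show ?thesis using n0(2) by metis
    qed
    have eqlt: "{t\<in>T. t < x0} = {d\<in>D. d < x0}" using agree by auto
    have "\<not> (x0 \<in> D)"
    proof
      assume xD: "x0 \<in> D"
      then have xT: "x0 \<notin> T" using n0(3) unfolding x0_def by auto
      have e1: "{t\<in>T. t \<le> x0} = {t\<in>T. t < x0}" using xT by (auto simp: le_less)
      have e2: "{d\<in>D. d \<le> x0} = insert x0 {d\<in>D. d < x0}" using xD by force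
      have "card {d\<in>D. d \<le> x0} = card {d\<in>D. d < x0} + 1"
        unfolding e2 using fD by (subst card_insert_disjoint) auto
      then show False using dom[of x0] e1 eqlt by simp
    qed
    then have "\<not> (a + int n0 \<in> D) \<and> (a + int n0 \<in> T)" using n0(3) unfolding x0_def by auto
    then show ?thesis
      unfolding lamA_eq[OF minT maxT ab] lamA_eq[OF minD maxD ab] lex_less_map N_def[symmetric]
      using n0 by blast
  qed
  have B: "lex_less (lamB T) (lamB D)"
  proof -
    define n where "n = nat (b - x)"
    have n: "n < N" "b - int n = x" using xab unfolding n_def N_def by auto
    obtain n0 where n0: "n0 < N" "\<forall>m<n0. (b - int m \<in> T) = (b - int m \<in> D)"
        "(b - int n0 \<in> T) \<noteq> (b - int n0 \<in> D)"
      using first_diff[of n N "\<lambda>n. b - int n \<in> T" "\<lambda>n. b - int n \<in> D"] n x by auto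
    define x0 where "x0 = b - int n0"
    have agree: "(y \<in> T) = (y \<in> D)" if "x0 < y" for y
    proof (cases "b < y")
      case True then show ?thesis using sT sD by auto
    next
      case False
      then have "y = b - int (nat (b - y))" "nat (b - y) < n0" using that unfolding x0_def by auto
      then show ?thesis using n0(2) by metis
    qed
    have eqgt: "{t\<in>T. x0 < t} = {d\<in>D. x0 < d}" using agree by auto
    have "\<not> (x0 \<in> T)"
    proof
      assume xT: "x0 \<in> T"
      then have xD: "x0 \<notin> D" using n0(3) unfolding x0_def by auto
      have cT: "card T = card {t\<in>T. t \<le> x0} + card {t\<in>T. x0 < t}"
      proof -
        have "T = {t\<in>T. t \<le> x0} \<union> {t\<in>T. x0 < t}" by auto
        then show ?thesis using fT by (metis (no_types, lifting) card_Un_disjoint disjoint_iff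
              finite_Un mem_Collect_eq not_le)
      qed
      have cD: "card D = card {t\<in>D. t \<le> x0} + card {t\<in>D. x0 < t}"
      proof -
        have "D = {t\<in>D. t \<le> x0} \<union> {t\<in>D. x0 < t}" by auto
        then show ?thesis using fD by (metis (no_types, lifting) card_Un_disjoint disjoint_iff
              finite_Un mem_Collect_eq not_le)
      qed
      have e1: "{t\<in>T. t \<le> x0} = insert x0 {t\<in>T. t \<le> x0 - 1}" using xT by force
      have e2: "{d\<in>D. d \<le> x0} = {d\<in>D. d \<le> x0 - 1}" apply (rule set_eqI) using xD by (smt (verit) mem_Collect_eq)
      have "card {t\<in>T. t \<le> x0} = card {t\<in>T. t \<le> x0 - 1} + 1"
        unfolding e1 using fT by (subst card_insert_disjoint) auto
      then show False using dom[of "x0 - 1"] e2 cT cD cardeq eqgt by simp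
    qed
    then have "\<not> (b - int n0 \<in> T) \<and> (b - int n0 \<in> D)" using n0(3) unfolding x0_def by auto
    then show ?thesis
      unfolding lamB_eq[OF minT maxT ab] lamB_eq[OF minD maxD ab] lex_less_map N_def[symmetric]
      using n0 by blast
  qed
  from le have "lamB D = lamA D \<or> lex_less (lamB D) (lamA D)" unfolding lex_le_def by auto
  then show ?thesis using A B lex_less_trans by metis
qed


lemma img_facts:
  fixes f :: "nat \<Rightarrow> int"
  assumes sm: "strict_mono_on {1..k} f" and k: "1 \<le> k"
  shows "finite (f ` {1..k})" "card (f ` {1..k}) = k" "f ` {1..k} \<subseteq> {f 1..f k}"
    "f 1 \<in> f ` {1..k}" "f k \<in> f ` {1..k}"
proof -
  have inj: "inj_on f {1..k}" using sm by (rule strict_mono_on_imp_inj_on)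
  show "finite (f ` {1..k})" by simp
  show "card (f ` {1..k}) = k" using card_image[OF inj] by simp
  show "f ` {1..k} \<subseteq> {f 1..f k}"
  proof
    fix y assume "y \<in> f ` {1..k}"
    then obtain j where j: "j \<in> {1..k}" "y = f j" by auto
    have "f 1 \<le> f j" using j k strict_mono_onD[OF sm, of 1 j] by (cases "j = 1") auto
    moreover have "f j \<le> f k" using j k strict_mono_onD[OF sm, of j k] by (cases "j = k") auto
    ultimately show "y \<in> {f 1..f k}" using j by auto
  qed
  show "f 1 \<in> f ` {1..k}" "f k \<in> f ` {1..k}" using k by auto
qed

lemma dom_lemma:
  fixes f g :: "nat \<Rightarrow> int"
  assumes sf: "strict_mono_on {1..k} f" and sg: "strict_mono_on {1..k} g"
    and le: "\<forall>j\<in>{1..k}. f j \<le> g j"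
  shows "card {d\<in>g ` {1..k}. d \<le> x} \<le> card {t\<in>f ` {1..k}. t \<le> x}"
proof -
  have i1: "inj_on f {1..k}" using sf by (rule strict_mono_on_imp_inj_on)
  have i2: "inj_on g {1..k}" using sg by (rule strict_mono_on_imp_inj_on)
  have e1: "{t\<in>f ` {1..k}. t \<le> x} = f ` {j\<in>{1..k}. f j \<le> x}" by auto
  have e2: "{t\<in>g ` {1..k}. t \<le> x} = g ` {j\<in>{1..k}. g j \<le> x}" by auto
  have c1: "card {t\<in>f ` {1..k}. t \<le> x} = card {j\<in>{1..k}. f j \<le> x}"
    unfolding e1 by (rule card_image) (rule inj_on_subset[OF i1], auto)
  have c2: "card {t\<in>g ` {1..k}. t \<le> x} = card {j\<in>{1..k}. g j \<le> x}"
    unfolding e2 by (rule card_image) (rule inj_on_subset[OF i2], auto)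
  have "{j\<in>{1..k}. g j \<le> x} \<subseteq> {j\<in>{1..k}. f j \<le> x}" using le by force
  then have "card {j\<in>{1..k}. g j \<le> x} \<le> card {j\<in>{1..k}. f j \<le> x}" by (rule card_mono[rotated]) simp
  then show ?thesis using c1 c2 by simp
qed

theorem lemma2:
  fixes k :: nat and a b :: int and p q :: "nat \<Rightarrow> int" and i :: nat
    and S D :: "int set"
  assumes "k \<ge> 3" and "a < b"
    and "strict_mono_on {1..k} p" and "p 1 = a" and "p k = b"
    and "S = p ` {1..k}"
    and "strict_mono_on {2..k-1} q" and "a < q 2" and "q (k-1) < b"
    and "\<forall>j. 2 \<le> j \<and> j \<le> k - 1 \<longrightarrow> p j \<le> q j"
    and "D = {a, b} \<union> q ` {2..k-1}"
    and "lex_le (lamB D) (lamA D)"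
    and "2 \<le> i" and "i \<le> k - 1" and "p i < q i" and "p i + 1 \<notin> S"
    and "(S - {p i}) \<union> {p i + 1} \<noteq> D"
  shows "lex_less (lamB ((S - {p i}) \<union> {p i + 1})) (lamA ((S - {p i}) \<union> {p i + 1}))"
proof -
  note sp = assms(3) and sq = assms(7)
  define p' where "p' = p(i := p i + 1)"
  define q' where "q' = (q(1 := a))(k := b)"
  have k1: "k \<noteq> 1" "i \<noteq> 1" "i \<noteq> k" using assms(1,13,14) by auto
  have p'1: "p' 1 = a" and p'k: "p' k = b" using k1 assms(4,5) unfolding p'_def by auto
  have q'1: "q' 1 = a" and q'k: "q' k = b" using k1 unfolding q'_def by auto
  have qmid: "q' j = q j" if "j \<noteq> 1" "j \<noteq> k" for j using that unfolding q'_def by auto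
  have qbounds: "a < q j \<and> q j < b" if "2 \<le> j" "j \<le> k - 1" for j
  proof -
    have "q 2 \<le> q j" using that strict_mono_onD[OF sq, of 2 j] by (cases "j = 2") auto
    moreover have "q j \<le> q (k-1)" using that strict_mono_onD[OF sq, of j "k-1"] assms(1) by (cases "j = k - 1") auto
    ultimately show ?thesis using assms(8,9) by auto
  qed
  have smq': "strict_mono_on {1..k} q'"
  proof (rule strict_mono_onI)
    fix r s assume r: "r \<in> {1..k}" and s: "s \<in> {1..k}" and rs: "r < s"
    show "q' r < q' s"
    proof (cases "r = 1")
      case True
      then show ?thesis
      proof (cases "s = k")
        case True then show ?thesis using \<open>r = 1\<close> q'1 q'k assms(2) by simp
      next
        case False then show ?thesis using \<open>r = 1\<close> q'1 qmid[of s] qbounds[of s] rs s by auto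
      qed
    next
      case False
      then have rm: "q' r = q r" "2 \<le> r" "r \<le> k - 1" using qmid[of r] r rs s by auto
      show ?thesis
      proof (cases "s = k")
        case True then show ?thesis using rm q'k qbounds[of r] by simp
      next
        case False then show ?thesis using rm qmid[of s] s rs strict_mono_onD[OF sq, of r s] by auto
      qed
    qed
  qed
  have smp': "strict_mono_on {1..k} p'"
  proof (rule strict_mono_onI)
    fix r s assume r: "r \<in> {1..k}" and s: "s \<in> {1..k}" and rs: "r < s"
    have prs: "p r < p s" using strict_mono_onD[OF sp r s rs] .
    show "p' r < p' s"
    proof (cases "r = i")
      case True
      have "p s \<in> S" using s assms(6) by auto
      then have "p s \<noteq> p i + 1" using assms(16) by auto
      then show ?thesis using True prs rs unfolding p'_def by auto
    next
      case False
      then show ?thesis using prs unfolding p'_def by auto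
    qed
  qed
  have pq: "\<forall>j\<in>{1..k}. p' j \<le> q' j"
  proof
    fix j assume j: "j \<in> {1..k}"
    show "p' j \<le> q' j"
    proof (cases "j = 1 \<or> j = k")
      case True then show ?thesis using p'1 p'k q'1 q'k by auto
    next
      case False
      then have "q' j = q j" "2 \<le> j" "j \<le> k - 1" using qmid j by auto
      then show ?thesis using assms(10,15) unfolding p'_def by auto
    qed
  qed
  have Deq: "D = q' ` {1..k}"
  proof -
    have "{1..k} = insert 1 (insert k {2..k-1})" using assms(1) by auto
    moreover have "q' ` {2..k-1} = q ` {2..k-1}" using qmid by (intro image_cong) auto
    ultimately show ?thesis using assms(11) q'1 q'k by auto
  qed
  have Teq: "(S - {p i}) \<union> {p i + 1} = p' ` {1..k}"
  proof -
    have inj: "inj_on p {1..k}" using sp by (rule strict_mono_on_imp_inj_on)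
    have iin: "i \<in> {1..k}" using assms(13,14) by auto
    have "S - {p i} = p ` ({1..k} - {i})" unfolding assms(6) using inj iin by (auto simp: inj_on_image_set_diff)
    moreover have "p' ` ({1..k} - {i}) = p ` ({1..k} - {i})" unfolding p'_def by auto
    moreover have "{1..k} = insert i ({1..k} - {i})" using iin by auto
    ultimately show ?thesis unfolding p'_def by (metis Un_commute fun_upd_same image_insert insert_is_Un)
  qed
  have k1': "1 \<le> k" using assms(1) by simp
  note IT = img_facts[OF smp' k1'] and ID = img_facts[OF smq' k1']
  show ?thesis unfolding Teq
  proof (rule core)
    show "finite (p' ` {1..k})" "finite D" using IT ID Deq by auto
    show "card (p' ` {1..k}) = card D" using IT ID Deq by auto
    show "p' ` {1..k} \<subseteq> {a..b}" "D \<subseteq> {a..b}" using IT ID Deq p'1 p'k q'1 q'k by auto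
    show "a \<in> p' ` {1..k}" "b \<in> p' ` {1..k}" "a \<in> D" "b \<in> D" using IT ID Deq p'1 p'k q'1 q'k by auto
    show "a \<le> b" using assms(2) by simp
    show "p' ` {1..k} \<noteq> D" using Teq assms(17) by simp
    show "card {d \<in> D. d \<le> x} \<le> card {t \<in> p' ` {1..k}. t \<le> x}" for x
      unfolding Deq by (rule dom_lemma[OF smp' smq' pq])
    show "lex_le (lamB D) (lamA D)" by (rule assms(12))
  qed
qed
end
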